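(* Let $f:\mathbb{R}^n\to\mathbb{R}$ be twice continuously differentiable, $B\in\mathbb{R}^{p\times n}$, $\lambda_1,\lambda_2>0$, $l\in\mathbb{R}^n$ with $l\le 0$, $u\in\mathbb{R}^n$ with $u\ge 0$, $\Omega=\{x\in\mathbb{R}^n: l\le x\le u\}$, $g(x)=\lambda_1\|Bx\|_0+\lambda_2\|x\|_0+\delta_\Omega(x)$ and $F=f+g$. For $z\in\mathbb{R}^n$ let $$\Pi(z)=\{x\in\Omega:\ \mathrm{supp}(x)\subset\mathrm{supp}(z),\ \mathrm{supp}(Bx)\subset\mathrm{supp}(Bz)\}.$$ Fix any $z\in\Omega$. Then: (i) $\partial F(z)=\nabla f(z)+\partial g(z)=\nabla f(z)+\mathcal{N}_{\Pi(z)}(z)$; (ii) for any $x\in\mathbb{R}^n$, $0\in\nabla f(x)+\mathcal{N}_{\Pi(z)}(x)$ implies $0\in\partial F(x)$.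
   Context: $\|y\|_0$ is the number of nonzero entries of $y$ and $\mathrm{supp}(y)=\{i: y_i\neq 0\}$. $\delta_\Omega$ is the indicator function of $\Omega$ ($0$ on $\Omega$, $+\infty$ outside). $\partial$ denotes the basic (limiting) subdifferential. $\Pi(z)$ is a convex polyhedral set and $\mathcal{N}_{\Pi(z)}(x)$ is its normal cone at $x$ (empty if $x\notin\Pi(z)$). *)

theory Defs
  imports "HOL-Analysis.Analysis"
begin

definition supp :: "real ^ 'n \<Rightarrow> 'n set" where
  "supp x = {i. x $ i \<noteq> 0}"

definition l0 :: "real ^ 'n \<Rightarrow> nat" where
  "l0 x = card (supp x)"

definition indicator_fun :: "'a set \<Rightarrow> 'a \<Rightarrow> ereal" where
  "indicator_fun S x = (if x \<in> S then 0 else \<infinity>)"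

definition box_set :: "real ^ 'n \<Rightarrow> real ^ 'n \<Rightarrow> (real ^ 'n) set" where
  "box_set l u = {x. \<forall>i. l $ i \<le> x $ i \<and> x $ i \<le> u $ i}"

definition normal_cone :: "(real ^ 'n) set \<Rightarrow> real ^ 'n \<Rightarrow> (real ^ 'n) set" where
  "normal_cone C x = (if x \<in> C then {v. \<forall>y\<in>C. v \<bullet> (y - x) \<le> 0} else {})"

definition frechet_subdiff :: "(real ^ 'n \<Rightarrow> ereal) \<Rightarrow> real ^ 'n \<Rightarrow> (real ^ 'n) set" where
  "frechet_subdiff F x = {v. \<bar>F x\<bar> \<noteq> \<infinity> \<and>
     (\<forall>e>0. \<exists>d>0. \<forall>y. norm (y - x) < d \<longrightarrow>
        F y \<ge> F x + ereal (v \<bullet> (y - x)) - ereal (e * norm (y - x)))}"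

definition limiting_subdiff :: "(real ^ 'n \<Rightarrow> ereal) \<Rightarrow> real ^ 'n \<Rightarrow> (real ^ 'n) set" where
  "limiting_subdiff F x = {v. \<bar>F x\<bar> \<noteq> \<infinity> \<and>
     (\<exists>xs vs. xs \<longlonglongrightarrow> x \<and> (\<lambda>k. F (xs k)) \<longlonglongrightarrow> F x \<and> vs \<longlonglongrightarrow> v \<and>
        (\<forall>k. vs k \<in> frechet_subdiff F (xs k)))}"

definition C2_with_grad :: "(real ^ 'n \<Rightarrow> real) \<Rightarrow> (real ^ 'n \<Rightarrow> real ^ 'n) \<Rightarrow> bool" where
  "C2_with_grad f gf \<longleftrightarrow> (\<forall>x. GDERIV f x :> gf x) \<and>
     (\<exists>H :: real ^ 'n \<Rightarrow> ((real ^ 'n) \<Rightarrow>\<^sub>L (real ^ 'n)).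
        (\<forall>x. (gf has_derivative blinfun_apply (H x)) (at x)) \<and> continuous_on UNIV H)"

end

theory Submission
  imports Defs
begin

lemma supp_local:
  fixes z :: "real^'n" and B :: "real^'n^'p"
  shows "\<exists>d>0. \<forall>y. norm (y - z) < d \<longrightarrow> supp z \<subseteq> supp y \<and> supp (B *v z) \<subseteq> supp (B *v y)"
proof -
  have id: "((\<lambda>y. y) \<longlongrightarrow> z) (nhds z)" by (simp add: filterlim_ident)
  have lin: "((\<lambda>y. B *v y) \<longlongrightarrow> B *v z) (nhds z)"
    using bounded_linear.tendsto[OF matrix_vector_mul_bounded_linear[of B] id] by simp
  have e1: "eventually (\<lambda>y. \<forall>i\<in>supp z. y $ i \<noteq> 0) (nhds z)"
    apply (rule eventually_ball_finite, simp)
    using tendsto_imp_eventually_ne[OF tendsto_vec_nth[OF id]] unfolding supp_def by auto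
  have e2: "eventually (\<lambda>y. \<forall>i\<in>supp (B *v z). (B *v y) $ i \<noteq> 0) (nhds z)"
    apply (rule eventually_ball_finite, simp)
    using tendsto_imp_eventually_ne[OF tendsto_vec_nth[OF lin]] unfolding supp_def by auto
  have "eventually (\<lambda>y. supp z \<subseteq> supp y \<and> supp (B *v z) \<subseteq> supp (B *v y)) (nhds z)"
    using eventually_conj[OF e1 e2] by eventually_elim (auto simp: supp_def)
  then show ?thesis unfolding eventually_nhds_metric dist_norm by auto
qed

definition G0 :: "real^'n^'p \<Rightarrow> real \<Rightarrow> real \<Rightarrow> real^'n \<Rightarrow> real" where
  "G0 B a b x = a * real (card (supp (B *v x))) + b * real (card (supp x))"

definition PP :: "real^'n^'p \<Rightarrow> (real^'n) set \<Rightarrow> real^'n \<Rightarrow> (real^'n) set" where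
  "PP B Om w = {x \<in> Om. supp x \<subseteq> supp w \<and> supp (B *v x) \<subseteq> supp (B *v w)}"

definition gg :: "real^'n^'p \<Rightarrow> real \<Rightarrow> real \<Rightarrow> (real^'n) set \<Rightarrow> real^'n \<Rightarrow> ereal" where
  "gg B a b Om x = (if x \<in> Om then ereal (G0 B a b x) else \<infinity>)"

lemma G0_mono:
  assumes "a \<ge> 0" "b \<ge> 0" "supp y \<subseteq> supp x" "supp (B *v y) \<subseteq> supp (B *v x)"
  shows "G0 B a b y \<le> G0 B a b x"
proof -
  have "card (supp y) \<le> card (supp x)" "card (supp (B *v y)) \<le> card (supp (B *v x))"
    using assms by (auto intro: card_mono)
  then show ?thesis unfolding G0_def using assms
    by (intro add_mono mult_left_mono) auto
qed

lemma G0_jump: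
  assumes "a > 0" "b > 0" "supp x \<subseteq> supp y" "supp (B *v x) \<subseteq> supp (B *v y)"
    "y \<notin> PP B Om x" "y \<in> Om"
  shows "G0 B a b y \<ge> G0 B a b x + min a b"
proof -
  have c1: "card (supp x) \<le> card (supp y)" "card (supp (B *v x)) \<le> card (supp (B *v y))"
    using assms by (auto intro: card_mono)
  have "supp x \<subset> supp y \<or> supp (B *v x) \<subset> supp (B *v y)"
    using assms unfolding PP_def by auto
  then have "card (supp x) < card (supp y) \<or> card (supp (B *v x)) < card (supp (B *v y))"
    by (auto intro: psubset_card_mono)
  then show ?thesis
  proof
    assume h: "card (supp x) < card (supp y)"
    have "a * real (card (supp (B *v x))) \<le> a * real (card (supp (B *v y)))"
      using c1 assms by (intro mult_left_mono) auto
    moreover have "b * (real (card (supp x)) + 1) \<le> b * real (card (supp y))"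
      using h assms by (intro mult_left_mono) auto
    moreover have "min a b \<le> b" by simp
    ultimately show ?thesis unfolding G0_def distrib_left by linarith
  next
    assume h: "card (supp (B *v x)) < card (supp (B *v y))"
    have "b * real (card (supp x)) \<le> b * real (card (supp y))"
      using c1 assms by (intro mult_left_mono) auto
    moreover have "a * (real (card (supp (B *v x))) + 1) \<le> a * real (card (supp (B *v y)))"
      using h assms by (intro mult_left_mono) auto
    moreover have "min a b \<le> a" by simp
    ultimately show ?thesis unfolding G0_def distrib_left by linarith
  qed
qed

lemma PP_seg:
  assumes "convex Om" "x \<in> Om" "y \<in> PP B Om x" "0 \<le> t" "t \<le> 1"
  shows "x + t *\<^sub>R (y - x) \<in> PP B Om x"
proof -
  have eq: "x + t *\<^sub>R (y - x) = (1 - t) *\<^sub>R x + t *\<^sub>R y" by (simp add: algebra_simps)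
  have "(1 - t) *\<^sub>R x + t *\<^sub>R y \<in> Om"
    using assms unfolding PP_def convex_def by auto
  moreover have "supp ((1 - t) *\<^sub>R x + t *\<^sub>R y) \<subseteq> supp x"
    using assms unfolding PP_def supp_def by auto
  moreover have "B *v ((1 - t) *\<^sub>R x + t *\<^sub>R y) = (1 - t) *\<^sub>R (B *v x) + t *\<^sub>R (B *v y)"
    by (simp add: matrix_vector_right_distrib matrix_vector_mult_scaleR)
  moreover have "supp ((1 - t) *\<^sub>R (B *v x) + t *\<^sub>R (B *v y)) \<subseteq> supp (B *v x)"
    using assms unfolding PP_def supp_def by auto
  ultimately show ?thesis unfolding eq PP_def by auto
qed



lemma frechet_gg:
  assumes ab: "a > 0" "b > 0" and cv: "convex Om" and x: "x \<in> Om"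
  shows "frechet_subdiff (gg B a b Om) x = normal_cone (PP B Om x) x"
proof
  have xP: "x \<in> PP B Om x" using x unfolding PP_def by auto
  show "frechet_subdiff (gg B a b Om) x \<subseteq> normal_cone (PP B Om x) x"
  proof
    fix v assume v: "v \<in> frechet_subdiff (gg B a b Om) x"
    have "v \<bullet> (y - x) \<le> 0" if y: "y \<in> PP B Om x" for y
    proof (rule ccontr)
      assume "\<not> v \<bullet> (y - x) \<le> 0"
      then have s: "v \<bullet> (y - x) > 0" by simp
      then have "y \<noteq> x" by auto
      then have n: "norm (y - x) > 0" by simp
      define e where "e = v \<bullet> (y - x) / (2 * norm (y - x))"
      have e: "e > 0" using s n unfolding e_def by simp
      obtain d where d: "d > 0" and dH: "\<And>w. norm (w - x) < d \<Longrightarrow>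
          gg B a b Om w \<ge> gg B a b Om x + ereal (v \<bullet> (w - x)) - ereal (e * norm (w - x))"
        using v e unfolding frechet_subdiff_def by blast
      define t where "t = min 1 (d / (2 * norm (y - x)))"
      have t: "t > 0" "t \<le> 1" using d n unfolding t_def by auto
      define w where "w = x + t *\<^sub>R (y - x)"
      have wP: "w \<in> PP B Om x" unfolding w_def using PP_seg[OF cv x y] t by auto
      have nw: "norm (w - x) = t * norm (y - x)" unfolding w_def using t by simp
      have "t \<le> d / (2 * norm (y - x))" unfolding t_def by simp
      then have "t * norm (y - x) \<le> d / (2 * norm (y - x)) * norm (y - x)"
        by (rule mult_right_mono) simp
      also have "\<dots> = d / 2" using n by simp
      finally have "t * norm (y - x) \<le> d / 2" .
      then have "norm (w - x) < d" using nw d by simp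
      from dH[OF this] have ineq: "gg B a b Om w \<ge> gg B a b Om x + ereal (v \<bullet> (w - x)) - ereal (e * norm (w - x))" .
      have "G0 B a b w \<le> G0 B a b x" using wP ab unfolding PP_def by (intro G0_mono) auto
      moreover have "w \<in> Om" using wP unfolding PP_def by auto
      ultimately have r: "G0 B a b x \<ge> G0 B a b x + v \<bullet> (w - x) - e * norm (w - x)"
        using ineq x unfolding gg_def by simp
      have "v \<bullet> (w - x) = t * (v \<bullet> (y - x))" unfolding w_def by (simp add: inner_diff_right)
      moreover have "e * norm (w - x) = t * (v \<bullet> (y - x)) / 2" unfolding nw e_def using n by (simp add: field_simps)
      ultimately show False using r mult_pos_pos[OF t(1) s] by linarith
    qed
    then show "v \<in> normal_cone (PP B Om x) x" unfolding normal_cone_def using xP by auto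
  qed
  show "normal_cone (PP B Om x) x \<subseteq> frechet_subdiff (gg B a b Om) x"
  proof
    fix v assume v: "v \<in> normal_cone (PP B Om x) x"
    then have vN: "\<And>y. y \<in> PP B Om x \<Longrightarrow> v \<bullet> (y - x) \<le> 0" unfolding normal_cone_def using xP by auto
    obtain d where d: "d > 0" and dS: "\<And>y. norm (y - x) < d \<Longrightarrow> supp x \<subseteq> supp y \<and> supp (B *v x) \<subseteq> supp (B *v y)"
      using supp_local by blast
    define c where "c = min a b"
    have c: "c > 0" using ab unfolding c_def by simp
    have "\<exists>d>0. \<forall>y. norm (y - x) < d \<longrightarrow>
        gg B a b Om y \<ge> gg B a b Om x + ereal (v \<bullet> (y - x)) - ereal (e * norm (y - x))"
      if e: "e > 0" for e
    proof (intro exI[of _ "min d (c / (norm v + 1))"] conjI allI impI)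
      have nv: "norm v + 1 > 0" using norm_ge_zero[of v] by linarith
      show "min d (c / (norm v + 1)) > 0" using d c nv by simp
      fix y assume y: "norm (y - x) < min d (c / (norm v + 1))"
      show "gg B a b Om y \<ge> gg B a b Om x + ereal (v \<bullet> (y - x)) - ereal (e * norm (y - x))"
      proof (cases "y \<in> Om")
        case False then show ?thesis unfolding gg_def by simp
      next
        case yO: True
        have sp: "supp x \<subseteq> supp y" "supp (B *v x) \<subseteq> supp (B *v y)" using dS y by auto
        have ne: "e * norm (y - x) \<ge> 0" using e by simp
        show ?thesis
        proof (cases "y \<in> PP B Om x")
          case True
          then have "G0 B a b y \<le> G0 B a b x" "G0 B a b x \<le> G0 B a b y"
            using ab sp unfolding PP_def by (auto intro!: G0_mono)
          then have "G0 B a b y = G0 B a b x" by simp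
          then show ?thesis using vN[OF True] yO x ne unfolding gg_def by simp
        next
          case False
          have J: "G0 B a b y \<ge> G0 B a b x + c" unfolding c_def
            using G0_jump[OF ab sp False yO] .
          have "v \<bullet> (y - x) \<le> norm v * norm (y - x)" by (rule norm_cauchy_schwarz)
          also have "\<dots> \<le> (norm v + 1) * norm (y - x)" by (simp add: mult_right_mono)
          also have "\<dots> \<le> c"
          proof -
            have nv2: "norm v + 1 > 0" using norm_ge_zero[of v] by linarith
            have "norm (y - x) < c / (norm v + 1)" using y by simp
            then have "norm (y - x) * (norm v + 1) < c"
              using pos_less_divide_eq[OF nv2] by simp
            then show ?thesis by (simp add: mult.commute)
          qed
          finally have "v \<bullet> (y - x) \<le> c" .
          then show ?thesis using J yO x ne unfolding gg_def by simp
        qed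
      qed
    qed
    moreover have "\<bar>gg B a b Om x\<bar> \<noteq> \<infinity>" using x unfolding gg_def by simp
    ultimately show "v \<in> frechet_subdiff (gg B a b Om) x" unfolding frechet_subdiff_def by blast
  qed
qed

lemma limiting_gg:
  assumes ab: "a > 0" "b > 0" and cv: "convex Om" and z: "z \<in> Om"
  shows "limiting_subdiff (gg B a b Om) z = normal_cone (PP B Om z) z"
proof
  have zP: "z \<in> PP B Om z" using z unfolding PP_def by auto
  have fin: "\<bar>gg B a b Om z\<bar> \<noteq> \<infinity>" using z unfolding gg_def by simp
  show "normal_cone (PP B Om z) z \<subseteq> limiting_subdiff (gg B a b Om) z"
  proof
    fix v assume "v \<in> normal_cone (PP B Om z) z"
    then have "v \<in> frechet_subdiff (gg B a b Om) z" using frechet_gg[where B=B, OF ab cv z] by simp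
    then show "v \<in> limiting_subdiff (gg B a b Om) z" unfolding limiting_subdiff_def using fin
      by (intro CollectI conjI exI[of _ "\<lambda>k. z"] exI[of _ "\<lambda>k. v"]) auto
  qed
  show "limiting_subdiff (gg B a b Om) z \<subseteq> normal_cone (PP B Om z) z"
  proof
    fix v assume "v \<in> limiting_subdiff (gg B a b Om) z"
    then obtain xs vs where xs: "xs \<longlonglongrightarrow> z" and gx: "(\<lambda>k. gg B a b Om (xs k)) \<longlonglongrightarrow> gg B a b Om z"
      and vs: "vs \<longlonglongrightarrow> v" and fr: "\<And>k. vs k \<in> frechet_subdiff (gg B a b Om) (xs k)"
      unfolding limiting_subdiff_def by blast
    obtain d where d: "d > 0" and dS: "\<And>y. norm (y - z) < d \<Longrightarrow> supp z \<subseteq> supp y \<and> supp (B *v z) \<subseteq> supp (B *v y)"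
      using supp_local by blast
    define c where "c = min a b"
    have c: "c > 0" using ab unfolding c_def by simp
    have ev1: "eventually (\<lambda>k. norm (xs k - z) < d) sequentially"
      using xs d unfolding tendsto_iff dist_norm by blast
    have "gg B a b Om z < ereal (G0 B a b z + c)" using z c unfolding gg_def by simp
    then have ev2: "eventually (\<lambda>k. gg B a b Om (xs k) < ereal (G0 B a b z + c)) sequentially"
      using order_tendstoD(2)[OF gx] by blast
    have ev3: "eventually (\<lambda>k. \<forall>y\<in>PP B Om z. vs k \<bullet> (y - xs k) \<le> 0) sequentially"
      using ev1 ev2
    proof eventually_elim
      case (elim k)
      have xO: "xs k \<in> Om" using elim(2) unfolding gg_def by (auto split: if_splits)
      have sp: "supp z \<subseteq> supp (xs k)" "supp (B *v z) \<subseteq> supp (B *v (xs k))" using dS elim(1) by auto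
      have xP: "xs k \<in> PP B Om z"
      proof (rule ccontr)
        assume "xs k \<notin> PP B Om z"
        from G0_jump[OF ab sp this xO] have "G0 B a b (xs k) \<ge> G0 B a b z + c" unfolding c_def .
        then show False using elim(2) xO unfolding gg_def by simp
      qed
      then have "PP B Om (xs k) = PP B Om z" using sp unfolding PP_def by auto
      then have "vs k \<in> normal_cone (PP B Om z) (xs k)" using fr[of k] frechet_gg[where B=B, OF ab cv xO] by simp
      then show ?case using xP unfolding normal_cone_def by auto
    qed
    have "v \<bullet> (y - z) \<le> 0" if y: "y \<in> PP B Om z" for y
    proof (rule tendsto_le[OF _ tendsto_const])
      show "(\<lambda>k. vs k \<bullet> (y - xs k)) \<longlonglongrightarrow> v \<bullet> (y - z)"
        by (intro tendsto_intros vs xs)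
      show "eventually (\<lambda>k. vs k \<bullet> (y - xs k) \<le> 0) sequentially"
        using ev3 y by (auto elim: eventually_mono)
    qed simp
    then show "v \<in> normal_cone (PP B Om z) z" unfolding normal_cone_def using zP by auto
  qed
qed

lemma frechet_add_smooth:
  assumes der: "GDERIV \<phi> x :> p" and H: "\<And>y. H2 y = ereal (\<phi> y) + H1 y"
    and w: "w \<in> frechet_subdiff H1 x"
  shows "p + w \<in> frechet_subdiff H2 x"
proof -
  have fin: "\<bar>H1 x\<bar> \<noteq> \<infinity>" and fr: "\<And>e. e > 0 \<Longrightarrow> \<exists>d>0. \<forall>y. norm (y - x) < d \<longrightarrow>
        H1 y \<ge> H1 x + ereal (w \<bullet> (y - x)) - ereal (e * norm (y - x))"
    using w unfolding frechet_subdiff_def by auto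
  obtain r where r: "H1 x = ereal r" using fin by (cases "H1 x") auto
  have dd: "\<And>e. e > 0 \<Longrightarrow> \<exists>d>0. \<forall>y. norm (y - x) < d \<longrightarrow>
      norm (\<phi> y - \<phi> x - (y - x) \<bullet> p) \<le> e * norm (y - x)"
    using der unfolding gderiv_def has_derivative_at_alt by blast
  have "\<exists>d>0. \<forall>y. norm (y - x) < d \<longrightarrow>
        H2 y \<ge> H2 x + ereal ((p + w) \<bullet> (y - x)) - ereal (e * norm (y - x))" if e: "e > 0" for e
  proof -
    obtain d1 where d1: "d1 > 0" and h1: "\<And>y. norm (y - x) < d1 \<Longrightarrow>
        norm (\<phi> y - \<phi> x - (y - x) \<bullet> p) \<le> e / 2 * norm (y - x)"
      using dd[of "e/2"] e by auto
    obtain d2 where d2: "d2 > 0" and h2: "\<And>y. norm (y - x) < d2 \<Longrightarrow>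
        H1 y \<ge> H1 x + ereal (w \<bullet> (y - x)) - ereal (e / 2 * norm (y - x))"
      using fr[of "e/2"] e by auto
    show ?thesis
    proof (intro exI[of _ "min d1 d2"] conjI allI impI)
      show "min d1 d2 > 0" using d1 d2 by simp
      fix y assume y: "norm (y - x) < min d1 d2"
      have A: "\<bar>\<phi> y - \<phi> x - (y - x) \<bullet> p\<bar> \<le> e / 2 * norm (y - x)" using h1 y by simp
      have Bh: "H1 y \<ge> ereal r + ereal (w \<bullet> (y - x)) - ereal (e / 2 * norm (y - x))" using h2 y r by simp
      have ip: "(p + w) \<bullet> (y - x) = (y - x) \<bullet> p + w \<bullet> (y - x)"
        by (simp only: inner_add_left inner_commute[of "y - x" p])
      show "H2 y \<ge> H2 x + ereal ((p + w) \<bullet> (y - x)) - ereal (e * norm (y - x))"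
      proof (cases "H1 y")
        case (real s)
        then have "s \<ge> r + w \<bullet> (y - x) - e / 2 * norm (y - x)" using Bh by simp
        moreover have "\<phi> y - \<phi> x - (y - x) \<bullet> p \<ge> - (e / 2 * norm (y - x))"
          using A by (simp only: abs_le_iff) linarith
        ultimately show ?thesis unfolding H real r ip by simp
      next
        case PInf then show ?thesis unfolding H by simp
      next
        case MInf then show ?thesis using Bh by simp
      qed
    qed
  qed
  moreover have "\<bar>H2 x\<bar> \<noteq> \<infinity>" unfolding H r by simp
  ultimately show ?thesis unfolding frechet_subdiff_def by blast
qed

lemma limiting_add_smooth:
  assumes der: "\<And>y. GDERIV \<phi> y :> p y" and pc: "continuous_on UNIV p"
    and H: "\<And>y. H2 y = ereal (\<phi> y) + H1 y"
    and w: "w \<in> limiting_subdiff H1 x"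
  shows "p x + w \<in> limiting_subdiff H2 x"
proof -
  have fin: "\<bar>H1 x\<bar> \<noteq> \<infinity>" using w unfolding limiting_subdiff_def by auto
  obtain xs vs where xs: "xs \<longlonglongrightarrow> x" and hx: "(\<lambda>k. H1 (xs k)) \<longlonglongrightarrow> H1 x"
      and vs: "vs \<longlonglongrightarrow> w" and fr: "\<forall>k. vs k \<in> frechet_subdiff H1 (xs k)"
    using w unfolding limiting_subdiff_def mem_Collect_eq by auto
  have cphi: "isCont \<phi> y" for y
    using der[of y] unfolding gderiv_def by (rule has_derivative_continuous)
  have cp: "isCont p y" for y
    using pc by (simp add: continuous_on_eq_continuous_at)
  have t1: "(\<lambda>k. \<phi> (xs k)) \<longlonglongrightarrow> \<phi> x" using isCont_tendsto_compose[OF cphi xs] .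
  have t2: "(\<lambda>k. p (xs k)) \<longlonglongrightarrow> p x" using isCont_tendsto_compose[OF cp xs] .
  have t3: "(\<lambda>k. H2 (xs k)) \<longlonglongrightarrow> H2 x"
    unfolding H by (rule tendsto_add_ereal[OF _ fin tendsto_ereal[OF t1] hx]) simp
  have "\<bar>H2 x\<bar> \<noteq> \<infinity>" unfolding H using fin by (cases "H1 x") auto
  moreover have "(\<lambda>k. p (xs k) + vs k) \<longlonglongrightarrow> p x + w" by (intro tendsto_intros t2 vs)
  moreover have "\<forall>k. p (xs k) + vs k \<in> frechet_subdiff H2 (xs k)"
    using frechet_add_smooth[OF der H] fr by blast
  ultimately show ?thesis unfolding limiting_subdiff_def using xs t3 by blast
qed


lemma box_convex: "convex (box_set (l::real^'n) u)"
proof (rule convexI)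
  fix x y :: "real^'n" and a b :: real
  assume x: "x \<in> box_set l u" and y: "y \<in> box_set l u" and a: "0 \<le> a" and b: "0 \<le> b" and ab: "a + b = 1"
  show "a *\<^sub>R x + b *\<^sub>R y \<in> box_set l u" unfolding box_set_def mem_Collect_eq
  proof
    fix i
    have xi: "l $ i \<le> x $ i" "x $ i \<le> u $ i" and yi: "l $ i \<le> y $ i" "y $ i \<le> u $ i"
      using x y unfolding box_set_def by auto
    have "a * l $ i \<le> a * x $ i" "b * l $ i \<le> b * y $ i" "a * x $ i \<le> a * u $ i" "b * y $ i \<le> b * u $ i"
      using xi yi a b by (auto intro: mult_left_mono)
    moreover have "l $ i = a * l $ i + b * l $ i" "u $ i = a * u $ i + b * u $ i"
      using ab by (metis distrib_right mult_1)+
    ultimately show "l $ i \<le> (a *\<^sub>R x + b *\<^sub>R y) $ i \<and> (a *\<^sub>R x + b *\<^sub>R y) $ i \<le> u $ i"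
      by simp
  qed
qed

theorem lemma2p4:
  fixes f :: "real ^ 'n \<Rightarrow> real" and gf :: "real ^ 'n \<Rightarrow> real ^ 'n"
    and B :: "real ^ 'n ^ 'p" and lam1 lam2 :: real and l u z :: "real ^ 'n"
    and \<Omega> :: "(real ^ 'n) set" and g F :: "real ^ 'n \<Rightarrow> ereal"
    and PiZ :: "real ^ 'n \<Rightarrow> (real ^ 'n) set"
  assumes f_C2: "C2_with_grad f gf"
    and lam1: "lam1 > 0" and lam2: "lam2 > 0"
    and l_nonpos: "\<forall>i. l $ i \<le> 0" and u_nonneg: "\<forall>i. u $ i \<ge> 0"
    and Omega_def: "\<Omega> = box_set l u"
    and g_def: "\<And>x. g x = ereal (lam1 * real (l0 (B *v x)) + lam2 * real (l0 x)) + indicator_fun \<Omega> x"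
    and F_def: "\<And>x. F x = ereal (f x) + g x"
    and Pi_def: "\<And>w. PiZ w = {x \<in> \<Omega>. supp x \<subseteq> supp w \<and> supp (B *v x) \<subseteq> supp (B *v w)}"
    and z: "z \<in> \<Omega>"
  shows "limiting_subdiff F z = (\<lambda>v. gf z + v) ` limiting_subdiff g z
       \<and> limiting_subdiff g z = normal_cone (PiZ z) z
       \<and> (\<forall>x. 0 \<in> (\<lambda>v. gf x + v) ` normal_cone (PiZ z) x \<longrightarrow> 0 \<in> limiting_subdiff F x)"
  proof -
  have fd: "\<And>x. GDERIV f x :> gf x" using f_C2 unfolding C2_with_grad_def by blast
  obtain H :: "real ^ 'n \<Rightarrow> ((real ^ 'n) \<Rightarrow>\<^sub>L (real ^ 'n))"
    where Hd: "\<And>x. (gf has_derivative blinfun_apply (H x)) (at x)"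
    using f_C2 unfolding C2_with_grad_def by blast
  have gfc: "continuous_on UNIV gf"
    using Hd has_derivative_continuous by (blast intro: continuous_at_imp_continuous_on)
  have nfd: "\<And>x. GDERIV (\<lambda>y. - f y) x :> - gf x"
  proof -
    fix x
    have "((\<lambda>y. - f y) has_derivative (\<lambda>h. - (h \<bullet> gf x))) (at x)"
      using fd[of x] unfolding gderiv_def by (rule has_derivative_minus)
    then show "GDERIV (\<lambda>y. - f y) x :> - gf x" unfolding gderiv_def by simp
  qed
  have ngfc: "continuous_on UNIV (\<lambda>x. - gf x)" using gfc by (rule continuous_on_minus)
  have gneg: "\<And>y. g y = ereal (- f y) + F y"
  proof -
    fix y
    have "ereal (- f y) + F y = (ereal (- f y) + ereal (f y)) + g y"
      unfolding F_def by (simp only: add.assoc)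
    then show "g y = ereal (- f y) + F y" by simp
  qed
  have gdef: "g = gg B lam1 lam2 \<Omega>"
  proof
    fix x show "g x = gg B lam1 lam2 \<Omega> x"
      unfolding g_def gg_def G0_def l0_def indicator_fun_def by simp
  qed
  have Pdef: "PiZ = PP B \<Omega>"
  proof
    fix w show "PiZ w = PP B \<Omega> w" unfolding Pi_def PP_def ..
  qed
  have cv: "convex \<Omega>" unfolding Omega_def by (rule box_convex)
  have limg: "\<And>x. x \<in> \<Omega> \<Longrightarrow> limiting_subdiff g x = normal_cone (PiZ x) x"
    unfolding gdef Pdef using limiting_gg[OF lam1 lam2 cv] by blast
  have P1: "limiting_subdiff F z = (\<lambda>v. gf z + v) ` limiting_subdiff g z"
  proof
    show "(\<lambda>v. gf z + v) ` limiting_subdiff g z \<subseteq> limiting_subdiff F z"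
      using limiting_add_smooth[OF fd gfc F_def] by blast
    show "limiting_subdiff F z \<subseteq> (\<lambda>v. gf z + v) ` limiting_subdiff g z"
    proof
      fix w assume "w \<in> limiting_subdiff F z"
      then have "- gf z + w \<in> limiting_subdiff g z"
        using limiting_add_smooth[OF nfd ngfc gneg] by blast
      moreover have "w = gf z + (- gf z + w)" by simp
      ultimately show "w \<in> (\<lambda>v. gf z + v) ` limiting_subdiff g z" by blast
    qed
  qed
  have P3: "0 \<in> limiting_subdiff F x" if h0: "0 \<in> (\<lambda>v. gf x + v) ` normal_cone (PiZ z) x" for x
  proof -
    obtain v where v0: "0 = gf x + v" and vN: "v \<in> normal_cone (PiZ z) x" using h0 by blast
    have xP: "x \<in> PiZ z" using vN unfolding normal_cone_def by (auto split: if_splits)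
    then have xO: "x \<in> \<Omega>" unfolding Pi_def by auto
    have sub: "PiZ x \<subseteq> PiZ z" using xP unfolding Pi_def by auto
    have xPx: "x \<in> PiZ x" using xO unfolding Pi_def by auto
    have "v \<in> normal_cone (PiZ x) x" using vN sub xPx xP unfolding normal_cone_def by auto
    then have "v \<in> limiting_subdiff g x" using limg[OF xO] by simp
    then have "gf x + v \<in> limiting_subdiff F x" using limiting_add_smooth[OF fd gfc F_def] by blast
    then show ?thesis using v0 by simp
  qed
  show ?thesis using P1 limg[OF z] P3 by blast
qed

end
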